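(* Let $\Omega=\{1,\ldots,n\}$, let $\mathbf{p}=(p_1,\ldots,p_n)$ and $\mathbf{q}=(q_1,\ldots,q_n)$ be probability vectors, and let $1\le s\le n$; set $\Omega_1=\{1,\ldots,s\}$ and $\Omega_2=\{s+1,\ldots,n\}$. For weights $w=(w_{i,j})_{i\ne j}$ with $0\le w_{i,j}\le1$ and $w_{i,j}+w_{j,i}=1$, define $p_I^w(k)=p_k^2+\sum_{i\ne k}2p_ip_kw_{k,i}$ and $A(w)=\sum_{k=1}^n\min(q_k,p_I^w(k))$; let $P^\star(\mathrm{acc})=\max_w A(w)$. Call $w$ truncated if $w_{i,j}=1$ whenever $i\in\Omega_1,j\in\Omega_2$, and $w_{i,j}=1$ whenever $i,j\in\Omega_2$ with $i<j$ (the weights $w_{i,j}$ with $i,j\in\Omega_1$ being free). Let $\tilde w$ be a truncated weight family maximizing $\sum_{k=1}^s\min(q_k,p_I^{w}(k))$ over truncated $w$, and let $\tilde P(\mathrm{acc})=A(\tilde w)$. Then $$\tilde P(\mathrm{acc})\ \ge\ P^\star(\mathrm{acc})-\sum_{x\in\Omega_2}\big(q_x-p_x^2\big)^+ .$$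
   Context: Interpretation: with two draft tokens $X_1,X_2$ drawn i.i.d. from $\mathbf{p}$, $w_{i,j}$ is the probability of selecting token $i$ when the unordered input pair is $\{i,j\}$, $p_I^w$ is the distribution of the selected token, and $A(w)$ is the acceptance probability after applying single-draft speculative sampling against $\mathbf{q}$; by the optimal-transport characterization, $\max_w A(w)$ is the optimal acceptance probability. In the paper the tokens are additionally ordered so that $q_1-p_1^2\ge\cdots\ge q_n-p_n^2$. $(a)^+=\max(a,0)$. *)

theory Defs
  imports Complex_Main
begin

definition prob_vec :: "nat \<Rightarrow> (nat \<Rightarrow> real) \<Rightarrow> bool" where
  "prob_vec n p \<longleftrightarrow> (\<forall>i\<in>{1..n}. 0 \<le> p i) \<and> (\<Sum>i=1..n. p i) = 1"

definition valid_weight :: "nat \<Rightarrow> (nat \<Rightarrow> nat \<Rightarrow> real) \<Rightarrow> bool" where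
  "valid_weight n w \<longleftrightarrow>
     (\<forall>i\<in>{1..n}. \<forall>j\<in>{1..n}. i \<noteq> j \<longrightarrow>
        0 \<le> w i j \<and> w i j \<le> 1 \<and> w i j + w j i = 1)"

definition pI :: "nat \<Rightarrow> (nat \<Rightarrow> real) \<Rightarrow> (nat \<Rightarrow> nat \<Rightarrow> real) \<Rightarrow> nat \<Rightarrow> real" where
  "pI n p w k = (p k)^2 + (\<Sum>i\<in>{1..n} - {k}. 2 * p i * p k * w k i)"

definition accept :: "nat \<Rightarrow> (nat \<Rightarrow> real) \<Rightarrow> (nat \<Rightarrow> real) \<Rightarrow> (nat \<Rightarrow> nat \<Rightarrow> real) \<Rightarrow> real" where
  "accept n p q w = (\<Sum>k=1..n. min (q k) (pI n p w k))"

definition opt_accept :: "nat \<Rightarrow> (nat \<Rightarrow> real) \<Rightarrow> (nat \<Rightarrow> real) \<Rightarrow> real" where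
  "opt_accept n p q = (SUP w\<in>{w. valid_weight n w}. accept n p q w)"

definition truncated :: "nat \<Rightarrow> nat \<Rightarrow> (nat \<Rightarrow> nat \<Rightarrow> real) \<Rightarrow> bool" where
  "truncated n s w \<longleftrightarrow> valid_weight n w \<and>
     (\<forall>i\<in>{1..s}. \<forall>j\<in>{s+1..n}. w i j = 1) \<and>
     (\<forall>i\<in>{s+1..n}. \<forall>j\<in>{s+1..n}. i < j \<longrightarrow> w i j = 1)"

definition partial_accept :: "nat \<Rightarrow> nat \<Rightarrow> (nat \<Rightarrow> real) \<Rightarrow> (nat \<Rightarrow> real) \<Rightarrow> (nat \<Rightarrow> nat \<Rightarrow> real) \<Rightarrow> real" where
  "partial_accept n s p q w = (\<Sum>k=1..s. min (q k) (pI n p w k))"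

end

theory Submission
  imports Defs
begin

lemma split_sum:
  fixes f :: "nat \<Rightarrow> real"
  assumes "s \<le> n"
  shows "(\<Sum>k=1..n. f k) = (\<Sum>k=1..s. f k) + (\<Sum>k=s+1..n. f k)"
proof -
  have "{1..n} = {1..s} \<union> {s+1..n}" using assms by auto
  moreover have "{1..s} \<inter> {s+1..n} = {}" by auto
  ultimately show ?thesis by (simp add: sum.union_disjoint)
qed

lemma key:
  assumes P: "prob_vec n p" and Q: "prob_vec n q"
    and "1 \<le> s" and sn: "s \<le> n"
    and T: "truncated n s wt"
    and M: "\<forall>w. truncated n s w \<longrightarrow> partial_accept n s p q w \<le> partial_accept n s p q wt"
    and V: "valid_weight n w"
  shows "accept n p q w \<le> accept n p q wt + (\<Sum>x=s+1..n. max (q x - (p x)^2) 0)"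
proof -
  define w' where "w' = (\<lambda>i j. if i \<le> s \<and> j \<le> s then w i j else if i \<le> s then 1
     else if j \<le> s then 0 else if i < j then 1 else (0::real))"
  have pn: "\<And>i. i \<in> {1..n} \<Longrightarrow> 0 \<le> p i" using P unfolding prob_vec_def by auto
  have Vw: "\<And>i j. i \<in> {1..n} \<Longrightarrow> j \<in> {1..n} \<Longrightarrow> i \<noteq> j \<Longrightarrow> 0 \<le> w i j \<and> w i j \<le> 1 \<and> w i j + w j i = 1"
    using V unfolding valid_weight_def by blast
  have "valid_weight n w'" unfolding valid_weight_def w'_def
  proof (intro ballI impI)
    fix i j assume i: "i \<in> {1..n}" and j: "j \<in> {1..n}" and ij: "i \<noteq> j"
    show "0 \<le> (if i \<le> s \<and> j \<le> s then w i j else if i \<le> s then 1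
     else if j \<le> s then 0 else if i < j then 1 else (0::real)) \<and>
       (if i \<le> s \<and> j \<le> s then w i j else if i \<le> s then 1
     else if j \<le> s then 0 else if i < j then 1 else (0::real)) \<le> 1 \<and>
       (if i \<le> s \<and> j \<le> s then w i j else if i \<le> s then 1
     else if j \<le> s then 0 else if i < j then 1 else (0::real)) +
       (if j \<le> s \<and> i \<le> s then w j i else if j \<le> s then 1
     else if i \<le> s then 0 else if j < i then 1 else (0::real)) = 1"
      using Vw[OF i j ij] ij by auto
  qed
  hence Tw': "truncated n s w'" unfolding truncated_def w'_def by auto
  have pImono: "pI n p w k \<le> pI n p w' k" if k: "k \<in> {1..s}" for k
    unfolding pI_def
  proof (rule add_left_mono, rule sum_mono)
    fix i assume i: "i \<in> {1..n} - {k}"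
    have kn: "k \<in> {1..n}" using k sn by auto
    have "w k i \<le> w' k i" using Vw[OF kn] i k unfolding w'_def by auto
    moreover have "0 \<le> 2 * p i * p k" using pn[OF kn] pn i by auto
    ultimately show "2 * p i * p k * w k i \<le> 2 * p i * p k * w' k i"
      by (simp add: mult_left_mono)
  qed
  have "partial_accept n s p q w \<le> partial_accept n s p q w'"
    unfolding partial_accept_def
    by (rule sum_mono) (use pImono in \<open>force simp: min_le_iff_disj\<close>)
  also have "\<dots> \<le> partial_accept n s p q wt" using M Tw' by blast
  finally have PA: "partial_accept n s p q w \<le> partial_accept n s p q wt" .
  have Vwt: "\<And>i j. i \<in> {1..n} \<Longrightarrow> j \<in> {1..n} \<Longrightarrow> i \<noteq> j \<Longrightarrow> 0 \<le> wt i j"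
    using T unfolding truncated_def valid_weight_def by blast
  have lowb: "(p k)^2 \<le> pI n p wt k" if k: "k \<in> {s+1..n}" for k
  proof -
    have kn: "k \<in> {1..n}" using k \<open>1 \<le> s\<close> by auto
    have "0 \<le> (\<Sum>i\<in>{1..n} - {k}. 2 * p i * p k * wt k i)"
      by (rule sum_nonneg) (use pn[OF kn] pn Vwt[OF kn] in auto)
    thus ?thesis unfolding pI_def by simp
  qed
  have A1: "accept n p q w \<le> partial_accept n s p q w + (\<Sum>k=s+1..n. q k)"
    unfolding accept_def partial_accept_def split_sum[OF sn]
    by (rule add_left_mono, rule sum_mono) simp
  have A2: "partial_accept n s p q wt + (\<Sum>k=s+1..n. min (q k) ((p k)^2)) \<le> accept n p q wt"
    unfolding accept_def partial_accept_def split_sum[OF sn]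
    by (rule add_left_mono, rule sum_mono) (use lowb in \<open>force simp: min_le_iff_disj\<close>)
  have A3: "(\<Sum>k=s+1..n. q k) = (\<Sum>k=s+1..n. min (q k) ((p k)^2)) + (\<Sum>x=s+1..n. max (q x - (p x)^2) 0)"
    unfolding sum.distrib[symmetric] by (rule sum.cong) auto
  show ?thesis using A1 A2 A3 PA by linarith
qed

theorem mainTheorem5:
  fixes n s :: nat and p q :: "nat \<Rightarrow> real" and wt :: "nat \<Rightarrow> nat \<Rightarrow> real"
  assumes "prob_vec n p" and "prob_vec n q"
    and "1 \<le> s" and "s \<le> n"
    and "truncated n s wt"
    and "\<forall>w. truncated n s w \<longrightarrow> partial_accept n s p q w \<le> partial_accept n s p q wt"
  shows "accept n p q wt \<ge> opt_accept n p q - (\<Sum>x=s+1..n. max (q x - (p x)^2) 0)"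
proof -
  have ne: "{w. valid_weight n w} \<noteq> {}"
  proof -
    have "valid_weight n (\<lambda>i j. 1/2)" unfolding valid_weight_def by auto
    thus ?thesis by blast
  qed
  have "opt_accept n p q \<le> accept n p q wt + (\<Sum>x=s+1..n. max (q x - (p x)^2) 0)"
    unfolding opt_accept_def
    by (rule cSUP_least[OF ne]) (use key[OF assms] in auto)
  thus ?thesis by linarith
qed

end
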